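(* Let $d\ge1$, let $|\cdot|$ be a Euclidean norm on $\mathbb{R}^d$, let $p\in(0,+\infty)$ and let $X$ be an $\mathbb{R}^d$-valued random vector with $\mathbb{E}|X|^p<+\infty$ and distribution $\mu$. Let $\overline{\mathcal{H}}_\mu$ be the closed convex hull of $\operatorname{supp}(\mu)$. Let $(a_N)_{N\ge1}$ be an $L^p$-optimal greedy quantization sequence for $X$. If $\operatorname{supp}(\mu)$ contains at least $N$ elements, then $a_1,\dots,a_N\in\overline{\mathcal{H}}_\mu$. If $\operatorname{supp}(\mu)$ is infinite, then $a_n\in\overline{\mathcal{H}}_\mu$ for every $n\ge1$.
   Context: For $\Gamma\subset\mathbb{R}^d$ put $e_p(\Gamma,X)=\big(\mathbb{E}\,d(X,\Gamma)^p\big)^{1/p}$ with $d(\xi,\Gamma)=\inf_{a\in\Gamma}|\xi-a|$ ($d(\xi,\emptyset)=+\infty$). A sequence $(a_N)_{N\ge1}$ in $\mathbb{R}^d$ is an $L^p$-optimal greedy quantization sequence if, writing $a^{(N)}=\{a_1,\dots,a_N\}$ and $a^{(0)}=\emptyset$, one has $a_{N+1}\in\operatorname{argmin}_{\xi\in\mathbb{R}^d}e_p(a^{(N)}\cup\{\xi\},X)$ for every $N\ge0$. *)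

theory Defs
  imports "HOL-Probability.Probability"
begin

definition msupp :: "'a::metric_space measure \<Rightarrow> 'a set" where
  "msupp M = {x. \<forall>e>0. emeasure M (ball x e) > 0}"

definition Lp_err_pow :: "real \<Rightarrow> 'a::metric_space measure \<Rightarrow> 'a set \<Rightarrow> ennreal" where
  "Lp_err_pow p M \<Gamma> = (if \<Gamma> = {} then \<infinity> else (\<integral>\<^sup>+ x. ennreal (infdist x \<Gamma> powr p) \<partial>M))"

(* a :: nat \<Rightarrow> 'a, used at indices n \<ge> 1; a^(N) = a ` {1..N}. *)
definition greedy_quant_seq :: "real \<Rightarrow> 'a::metric_space measure \<Rightarrow> (nat \<Rightarrow> 'a) \<Rightarrow> bool" where
  "greedy_quant_seq p M a \<longleftrightarrow>
     (\<forall>N. \<forall>\<xi>. Lp_err_pow p M (a ` {1..N} \<union> {a (Suc N)}) \<le> Lp_err_pow p M (a ` {1..N} \<union> {\<xi>}))"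

end

theory Submission
  imports Defs
begin

lemma meas_infdist:
  fixes A :: "'a::euclidean_space set"
  assumes "sets M = sets borel"
  shows "(\<lambda>x. ennreal (infdist x A powr p)) \<in> borel_measurable M"
proof -
  have c: "continuous_on UNIV (\<lambda>x::'a. infdist x A)"
    by (intro continuous_at_imp_continuous_on ballI continuous_infdist continuous_ident)
  have [measurable]: "(\<lambda>x::'a. infdist x A) \<in> borel_measurable borel"
    using c by (rule borel_measurable_continuous_onI)
  show ?thesis by (subst measurable_cong_sets[OF assms refl]) measurable
qed

lemma powr_sum_bound:
  fixes u v p :: real
  assumes "u \<ge> 0" "v \<ge> 0" "p > 0"
  shows "(u + v) powr p \<le> 2 powr p * (u powr p + v powr p)"
proof -
  have "(u + v) powr p \<le> (2 * max u v) powr p"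
    by (rule powr_mono2) (use assms in auto)
  also have "\<dots> = 2 powr p * max u v powr p" using assms by (simp add: powr_mult)
  also have "max u v powr p \<le> u powr p + v powr p"
    using assms by (auto simp: max_def)
  then have "2 powr p * max u v powr p \<le> 2 powr p * (u powr p + v powr p)"
    by (intro mult_left_mono) auto
  finally show ?thesis .
qed

lemma fin_err:
  fixes M :: "'a::euclidean_space measure"
  assumes "prob_space M" "sets M = sets borel" "p > 0"
    and "(\<integral>\<^sup>+ x. ennreal (norm x powr p) \<partial>M) < \<infinity>"
    and "\<gamma> \<in> \<Gamma>"
  shows "(\<integral>\<^sup>+ x. ennreal (infdist x \<Gamma> powr p) \<partial>M) < \<infinity>"
proof -
  have sp: "space M = UNIV" using sets_eq_imp_space_eq[OF assms(2)] by simp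
  have mn[measurable]: "(\<lambda>x. ennreal (norm x powr p)) \<in> borel_measurable M"
    by (subst measurable_cong_sets[OF assms(2) refl]) measurable
  have pt: "ennreal (infdist x \<Gamma> powr p) \<le> ennreal (2 powr p) * ennreal (norm x powr p) + ennreal (2 powr p * norm \<gamma> powr p)" for x
  proof -
    have "infdist x \<Gamma> \<le> norm x + norm \<gamma>"
      using infdist_le[OF assms(5), of x] norm_triangle_ineq4[of x \<gamma>] by (simp add: dist_norm)
    then have "infdist x \<Gamma> powr p \<le> (norm x + norm \<gamma>) powr p"
      by (intro powr_mono2) (use assms infdist_nonneg in auto)
    also have "\<dots> \<le> 2 powr p * (norm x powr p + norm \<gamma> powr p)"
      by (rule powr_sum_bound) (use assms in auto)
    finally show ?thesis
      by (simp add: ennreal_mult[symmetric] ennreal_plus[symmetric] distrib_left del: ennreal_plus)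
  qed
  have "(\<integral>\<^sup>+ x. ennreal (infdist x \<Gamma> powr p) \<partial>M) \<le> (\<integral>\<^sup>+ x. ennreal (2 powr p) * ennreal (norm x powr p) + ennreal (2 powr p * norm \<gamma> powr p) \<partial>M)"
    by (intro nn_integral_mono pt)
  also have "\<dots> = ennreal (2 powr p) * (\<integral>\<^sup>+ x. ennreal (norm x powr p) \<partial>M) + ennreal (2 powr p * norm \<gamma> powr p)"
    by (subst nn_integral_add; (measurable)?; simp add: nn_integral_cmult[OF mn] prob_space.emeasure_space_1[OF assms(1)])
  also have "\<dots> < \<infinity>" using assms(4) by (simp add: ennreal_mult_less_top)
  finally show ?thesis .
qed

lemma ae_supp:
  fixes M :: "'a::euclidean_space measure"
  assumes "sets M = sets borel"
  shows "AE x in M. x \<in> msupp M"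
proof -
  define F where "F = {ball y e | y e. e > 0 \<and> emeasure M (ball y e) = 0}"
  have "\<And>S. S \<in> F \<Longrightarrow> open S" unfolding F_def by auto
  then obtain F' where F': "F' \<subseteq> F" "countable F'" "\<Union>F' = \<Union>F" by (rule Lindelof)
  have cov: "x \<in> \<Union>F" if "x \<notin> msupp M" for x
  proof -
    from that obtain e where "e > 0" "\<not> emeasure M (ball x e) > 0" unfolding msupp_def by auto
    then have "ball x e \<in> F" unfolding F_def by auto
    then show ?thesis using \<open>e > 0\<close> by (meson UnionI centre_in_ball)
  qed
  have "AE x in M. \<forall>b\<in>F'. x \<notin> b"
  proof (rule AE_ball_countable')
    fix b assume "b \<in> F'"
    then obtain y e where b: "b = ball y e" "emeasure M (ball y e) = 0" using F' unfolding F_def by auto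
    have "b \<in> sets M" using assms b by simp
    then have "b \<in> null_sets M" using b by (simp add: null_setsI)
    then show "AE x in M. x \<notin> b" by (rule AE_not_in)
  qed (use F' in auto)
  then show ?thesis
  proof (rule AE_mp, intro AE_I2 impI)
    fix x assume "\<forall>b\<in>F'. x \<notin> b"
    then have "x \<notin> \<Union>F" using F'(3) by blast
    then show "x \<in> msupp M" using cov by blast
  qed
qed

lemma step:
  fixes M :: "'a::euclidean_space measure" and p :: real and a :: "nat \<Rightarrow> 'a"
  assumes P: "prob_space M"
    and SB: "sets M = sets borel"
    and pp: "p > 0"
    and mom: "(\<integral>\<^sup>+ x. ennreal (norm x powr p) \<partial>M) < \<infinity>"
    and G: "greedy_quant_seq p M a"
    and card: "infinite (msupp M) \<or> Suc N \<le> card (msupp M)"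
  shows "a (Suc N) \<in> closure (convex hull (msupp M))"
proof (rule ccontr)
  define S where "S = msupp M"
  define H where "H = closure (convex hull S)"
  define \<Gamma> where "\<Gamma> = a ` {1..N}"
  define \<xi> where "\<xi> = a (Suc N)"
  assume "a (Suc N) \<notin> closure (convex hull (msupp M))"
  then have xiH: "\<xi> \<notin> H" by (simp add: \<xi>_def H_def S_def)
  have sp: "space M = UNIV" using sets_eq_imp_space_eq[OF SB] by simp
  have aeS: "AE x in M. x \<in> S" unfolding S_def by (rule ae_supp[OF SB])
  have finG: "finite \<Gamma>" unfolding \<Gamma>_def by simp
  have cG: "card \<Gamma> \<le> N" unfolding \<Gamma>_def using card_image_le[of "{1..N}" a] by simp
  obtain s where sS: "s \<in> S" and sG: "s \<notin> \<Gamma>"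
  proof -
    have "\<not> S \<subseteq> \<Gamma>"
    proof
      assume "S \<subseteq> \<Gamma>"
      then have "finite S" "card S \<le> card \<Gamma>" using finG by (auto intro: finite_subset card_mono)
      then show False using card cG unfolding S_def by auto
    qed
    then show ?thesis using that by blast
  qed
  have SH: "S \<subseteq> H" unfolding H_def by (rule subset_trans[OF hull_subset closure_subset])
  have Hc: "closed H" "convex H" "H \<noteq> {}"
  proof -
    show "closed H" unfolding H_def by simp
    show "convex H" unfolding H_def by (simp add: convex_closure convex_convex_hull)
    show "H \<noteq> {}" using SH sS by auto
  qed
  define \<pi> where "\<pi> = closest_point H \<xi>"
  have piH: "\<pi> \<in> H" unfolding \<pi>_def by (rule closest_point_in_set[OF Hc(1,3)])
  have pimin: "\<forall>y\<in>H. dist \<xi> \<pi> \<le> dist \<xi> y" unfolding \<pi>_def using closest_point_exists(2)[OF Hc(1,3)] by blast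
  have strict: "dist x \<pi> < dist x \<xi>" if "x \<in> H" for x
  proof -
    have ip: "inner (\<xi> - \<pi>) (x - \<pi>) \<le> 0"
      by (rule any_closest_point_dot[OF Hc(2,1) piH that pimin])
    have ne: "\<xi> \<noteq> \<pi>" using piH xiH by auto
    have "(dist x \<xi>)^2 = (dist x \<pi>)^2 + (dist \<xi> \<pi>)^2 - 2 * inner (\<xi> - \<pi>) (x - \<pi>)"
    proof -
      have "inner (x - \<pi>) (\<xi> - \<pi>) = ((norm (x - \<pi>))^2 + (norm (\<xi> - \<pi>))^2 - (norm ((x - \<pi>) - (\<xi> - \<pi>)))^2) / 2"
        by (rule dot_norm_neg)
      moreover have "(x - \<pi>) - (\<xi> - \<pi>) = x - \<xi>" by simp
      ultimately have "(norm (x - \<xi>))^2 = (norm (x - \<pi>))^2 + (norm (\<xi> - \<pi>))^2 - 2 * inner (\<xi> - \<pi>) (x - \<pi>)"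
        by (simp add: inner_commute)
      then show ?thesis by (simp add: dist_norm)
    qed
    moreover have "(dist \<xi> \<pi>)^2 > 0" using ne by simp
    ultimately have "(dist x \<pi>)^2 < (dist x \<xi>)^2" using ip by linarith
    then show ?thesis by (rule power_less_imp_less_base) simp
  qed
  define F where "F = (\<lambda>x. ennreal (infdist x (\<Gamma> \<union> {\<xi>}) powr p))"
  define Gf where "Gf = (\<lambda>x. ennreal (infdist x (\<Gamma> \<union> {\<pi>}) powr p))"
  define Hf where "Hf = (\<lambda>x. ennreal (infdist x (\<Gamma> \<union> {s}) powr p))"
  define K where "K = (\<lambda>x. ennreal (infdist x \<Gamma> powr p))"
  have meas: "F \<in> borel_measurable M" "Gf \<in> borel_measurable M" "Hf \<in> borel_measurable M" "K \<in> borel_measurable M"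
    unfolding F_def Gf_def Hf_def K_def by (rule meas_infdist[OF SB])+
  have gr: "Lp_err_pow p M (\<Gamma> \<union> {\<xi>}) \<le> Lp_err_pow p M (\<Gamma> \<union> {\<zeta>})" for \<zeta>
    using G unfolding greedy_quant_seq_def \<Gamma>_def \<xi>_def by blast
  have FG: "integral\<^sup>N M F \<le> integral\<^sup>N M Gf"
    using gr[of \<pi>] unfolding Lp_err_pow_def F_def Gf_def by simp
  have FH: "integral\<^sup>N M F \<le> integral\<^sup>N M Hf"
    using gr[of s] unfolding Lp_err_pow_def F_def Hf_def by simp
  have Gfin: "integral\<^sup>N M Gf \<noteq> \<infinity>"
    using fin_err[OF P SB pp mom, of \<pi> "\<Gamma> \<union> {\<pi>}"] unfolding Gf_def by simp
  have Hfin: "integral\<^sup>N M Hf \<noteq> \<infinity>"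
    using fin_err[OF P SB pp mom, of s "\<Gamma> \<union> {s}"] unfolding Hf_def by simp
  have cmp: "infdist x (\<Gamma> \<union> {\<pi>}) \<le> infdist x (\<Gamma> \<union> {\<xi>}) \<and>
      ((\<Gamma> = {} \<or> dist x \<xi> < infdist x \<Gamma>) \<longrightarrow> infdist x (\<Gamma> \<union> {\<pi>}) < infdist x (\<Gamma> \<union> {\<xi>}))"
    if "x \<in> H" for x
  proof (cases "\<Gamma> = {}")
    case True then show ?thesis using strict[OF that] by simp
  next
    case False
    have a1: "min (infdist x \<Gamma>) (dist x \<pi>) \<le> min (infdist x \<Gamma>) (dist x \<xi>)"
      using strict[OF that] by linarith
    have a2: "dist x \<xi> < infdist x \<Gamma> \<Longrightarrow> min (infdist x \<Gamma>) (dist x \<pi>) < min (infdist x \<Gamma>) (dist x \<xi>)"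
      using strict[OF that] by linarith
    have e1: "infdist x (\<Gamma> \<union> {\<pi>}) = min (infdist x \<Gamma>) (dist x \<pi>)"
      using infdist_Un_min[OF False, of "{\<pi>}" x] by simp
    have e2: "infdist x (\<Gamma> \<union> {\<xi>}) = min (infdist x \<Gamma>) (dist x \<xi>)"
      using infdist_Un_min[OF False, of "{\<xi>}" x] by simp
    show ?thesis unfolding e1 e2 using a1 a2 False by blast
  qed
  have GleF: "AE x in M. Gf x \<le> F x"
    using aeS
  proof (rule AE_mp, intro AE_I2 impI)
    fix x assume "x \<in> S"
    then have "x \<in> H" using SH by auto
    then show "Gf x \<le> F x" unfolding Gf_def F_def
      using cmp pp by (auto intro!: ennreal_leI powr_mono2 infdist_nonneg)
  qed
  have FleG: "AE x in M. F x \<le> Gf x"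
  proof (rule ccontr)
    assume "\<not> (AE x in M. F x \<le> Gf x)"
    then have "integral\<^sup>N M Gf < integral\<^sup>N M F"
      by (intro nn_integral_less meas Gfin GleF)
    then show False using FG by simp
  qed
  have key: "AE x in M. \<Gamma> \<noteq> {} \<and> infdist x \<Gamma> \<le> dist x \<xi>"
    using aeS FleG
  proof (eventually_elim)
    case (elim x)
    then have xH: "x \<in> H" using SH by auto
    show ?case
    proof (rule ccontr)
      assume "\<not> (\<Gamma> \<noteq> {} \<and> infdist x \<Gamma> \<le> dist x \<xi>)"
      then have "\<Gamma> = {} \<or> dist x \<xi> < infdist x \<Gamma>" by auto
      then have "infdist x (\<Gamma> \<union> {\<pi>}) < infdist x (\<Gamma> \<union> {\<xi>})" using cmp[OF xH] by blast
      then have "infdist x (\<Gamma> \<union> {\<pi>}) powr p < infdist x (\<Gamma> \<union> {\<xi>}) powr p"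
        using pp infdist_nonneg by (intro powr_less_mono2) auto
      then have "Gf x < F x" unfolding Gf_def F_def
        by (subst ennreal_less_iff) auto
      then show False using elim by simp
    qed
  qed
  have Gne: "\<Gamma> \<noteq> {}"
  proof
    assume "\<Gamma> = {}"
    then have "AE x in M. False" using key by simp
    then show False using prob_space.AE_False[OF P] by simp
  qed
  have FK: "integral\<^sup>N M F = integral\<^sup>N M K"
    using key
  proof (intro nn_integral_cong_AE, eventually_elim)
    case (elim x)
    have "infdist x (\<Gamma> \<union> {\<xi>}) = min (infdist x \<Gamma>) (dist x \<xi>)"
      using infdist_Un_min[OF Gne, of "{\<xi>}" x] by simp
    then show ?case unfolding F_def K_def using elim by (simp add: min_def)
  qed
  have HK: "AE x in M. Hf x \<le> K x"
  proof (intro AE_I2)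
    fix x
    have "infdist x (\<Gamma> \<union> {s}) \<le> infdist x \<Gamma>" by (rule infdist_mono) (use Gne in auto)
    then show "Hf x \<le> K x" unfolding Hf_def K_def
      using pp by (auto intro!: ennreal_leI powr_mono2 infdist_nonneg)
  qed
  define \<delta> where "\<delta> = infdist s \<Gamma>"
  have dpos: "\<delta> > 0" unfolding \<delta>_def
    by (rule infdist_pos_not_in_closed[OF finite_imp_closed[OF finG] Gne sG])
  define B where "B = ball s (\<delta>/2)"
  have Bpos: "emeasure M B > 0" using sS dpos unfolding B_def S_def msupp_def by auto
  have Bsets: "B \<in> sets M" unfolding B_def using SB by simp
  have ltB: "Hf x < K x" if "x \<in> B" for x
  proof -
    have dxs: "dist x s < \<delta>/2" using that unfolding B_def by (simp add: dist_commute)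
    have "\<delta> \<le> infdist x \<Gamma> + dist s x" unfolding \<delta>_def by (rule infdist_triangle)
    then have "infdist x (\<Gamma> \<union> {s}) < infdist x \<Gamma>"
      using infdist_le[of s "\<Gamma> \<union> {s}" x] dxs by (simp add: dist_commute)
    then have "infdist x (\<Gamma> \<union> {s}) powr p < infdist x \<Gamma> powr p"
      using pp infdist_nonneg by (intro powr_less_mono2) auto
    then show ?thesis unfolding Hf_def K_def by (subst ennreal_less_iff) auto
  qed
  have notKH: "\<not> (AE x in M. K x \<le> Hf x)"
  proof
    assume "AE x in M. K x \<le> Hf x"
    then have "AE x in M. x \<notin> B" by eventually_elim (use ltB in force)
    then have "emeasure M B = 0"
      using AE_iff_measurable[OF Bsets, of "\<lambda>x. x \<notin> B"] sp by auto
    then show False using Bpos by simp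
  qed
  have "integral\<^sup>N M Hf < integral\<^sup>N M K"
    by (intro nn_integral_less meas Hfin HK notKH)
  then show False using FK FH by simp
qed


theorem proposition2p2:
  fixes M :: "'a::euclidean_space measure" and p :: real and a :: "nat \<Rightarrow> 'a"
  assumes "prob_space M"
    and "sets M = sets borel"
    and "p > 0"
    and "(\<integral>\<^sup>+ x. ennreal (norm x powr p) \<partial>M) < \<infinity>"
    and "greedy_quant_seq p M a"
  shows "(\<forall>N. (infinite (msupp M) \<or> N \<le> card (msupp M)) \<longrightarrow>
            (\<forall>n\<in>{1..N}. a n \<in> closure (convex hull (msupp M))))
       \<and> (infinite (msupp M) \<longrightarrow> (\<forall>n\<ge>1. a n \<in> closure (convex hull (msupp M))))"
proof (intro conjI allI impI ballI)
  fix N n assume c: "infinite (msupp M) \<or> N \<le> card (msupp M)" and n: "n \<in> {1..N}"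
  then obtain m where m: "n = Suc m" by (cases n) auto
  have "infinite (msupp M) \<or> Suc m \<le> card (msupp M)" using c n m by auto
  then show "a n \<in> closure (convex hull (msupp M))"
    using step[OF assms] m by blast
next
  fix n :: nat assume c: "infinite (msupp M)" and n: "n \<ge> 1"
  then obtain m where m: "n = Suc m" by (cases n) auto
  then show "a n \<in> closure (convex hull (msupp M))"
    using step[OF assms, of m] c by blast
qed

end
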